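(* Let $p$ be an integer with $1\le p\le13$ and let $\eta\in\mathbf P^p([-1,1])$ with $\eta(-1)=0$ and $\eta\not\equiv0$. Let $S(\eta)$ be the unique maximizer of $\phi\mapsto J(\phi;\eta)=\int_{-1}^1\big(\eta\phi-\frac14(\eta-\phi)^2\big)dx$ over $\{\phi\in\mathbf P^{p-1}([-1,1]):\phi(1)=\eta(1)\}$. Then $J(S(\eta);\eta)>0$.
   Context: $\mathbf P^q([-1,1])$ denotes the real polynomials of degree at most $q$ on $[-1,1]$. The maximizer exists and is unique since $J(\cdot;\eta)$ is strictly concave and the constraint set is a nonempty affine subspace. *)

theory Defs
  imports "HOL-Analysis.Analysis" "HOL-Computational_Algebra.Polynomial"
begin

definition J :: "real poly \<Rightarrow> real poly \<Rightarrow> real" where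
  "J phi eta = integral {-1..1}
     (\<lambda>x. poly eta x * poly phi x - (1/4) * (poly eta x - poly phi x)^2)"

definition admissible :: "nat \<Rightarrow> real poly \<Rightarrow> real poly \<Rightarrow> bool" where
  "admissible p eta phi \<longleftrightarrow> degree phi \<le> p - 1 \<and> poly phi 1 = poly eta 1"

definition S :: "nat \<Rightarrow> real poly \<Rightarrow> real poly" where
  "S p eta = (THE phi. admissible p eta phi \<and>
                 (\<forall>psi. admissible p eta psi \<longrightarrow> J psi eta \<le> J phi eta))"

end

theory Submission
  imports Defs
begin


definition ipx :: "nat \<Rightarrow> real poly \<Rightarrow> real" where
  "ipx i g = integral {-1..1} (\<lambda>x. x ^ i * poly g x)"

definition ip :: "real poly \<Rightarrow> real poly \<Rightarrow> real" where
  "ip f g = integral {-1..1} (\<lambda>x. poly f x * poly g x)"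

definition mom :: "nat \<Rightarrow> real" where
  "mom n = (if even n then 2 / (real n + 1) else 0)"

lemma mom_has_integral: "((\<lambda>x::real. x ^ n) has_integral mom n) {-1..1}"
proof -
  have "((\<lambda>x::real. x ^ n) has_integral ((1::real)^(Suc n)/(Suc n) - (-1)^(Suc n)/(Suc n))) {-1..1}"
  proof (rule fundamental_theorem_of_calculus)
    fix x :: real
    show "((\<lambda>x. x^(Suc n)/(Suc n)) has_vector_derivative x^n) (at x within {-1..1})"
      unfolding has_real_derivative_iff_has_vector_derivative [symmetric]
      by (rule derivative_eq_intros refl | simp)+
  qed simp
  then show ?thesis
    by (auto simp: mom_def field_simps)
qed

lemma int_pp: "(\<lambda>x::real. poly f x * poly g x) integrable_on {-1..1}"
  by (intro integrable_continuous_interval continuous_intros)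

lemma int_xp: "(\<lambda>x::real. x^i * poly g x) integrable_on {-1..1}"
  by (intro integrable_continuous_interval continuous_intros)

lemma ipx_pCons: "ipx i (pCons a q) = a * mom i + ipx (Suc i) q"
proof -
  have "(\<lambda>x::real. x ^ i * poly (pCons a q) x) = (\<lambda>x. a * x^i + x^(Suc i) * poly q x)"
    by (auto simp: algebra_simps)
  moreover have "integral {-1..1} (\<lambda>x::real. a * x^i + x^(Suc i) * poly q x) = a * mom i + ipx (Suc i) q"
    unfolding ipx_def
    apply (subst integral_add)
      apply (intro integrable_continuous_interval continuous_intros)
     apply (rule int_xp)
    using mom_has_integral[of i] by (simp add: integral_unique)
  ultimately show ?thesis unfolding ipx_def by simp
qed

fun dot :: "real list \<Rightarrow> nat \<Rightarrow> real" where
  "dot [] k = 0"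
| "dot (x # xs) k = x * mom k + dot xs (Suc k)"

lemma ipx_Poly: "ipx i (Poly xs) = dot xs i"
proof (induction xs arbitrary: i)
  case Nil
  then show ?case by (simp add: ipx_def)
next
  case (Cons a xs)
  then show ?case by (simp add: ipx_pCons)
qed


lemma ip_comm: "ip f g = ip g f"
  unfolding ip_def by (simp add: mult.commute)

lemma ip_add_left: "ip (f + g) h = ip f h + ip g h"
  unfolding ip_def
  by (simp add: distrib_right Henstock_Kurzweil_Integration.integral_add int_pp)

lemma ip_diff_left: "ip (f - g) h = ip f h - ip g h"
  unfolding ip_def
  by (simp add: left_diff_distrib Henstock_Kurzweil_Integration.integral_diff int_pp)

lemma ip_smult_left: "ip (smult c f) h = c * ip f h"
  unfolding ip_def by (simp add: mult.assoc)

lemma ip_add_right: "ip h (f + g) = ip h f + ip h g"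
  by (metis ip_comm ip_add_left)
lemma ip_diff_right: "ip h (f - g) = ip h f - ip h g"
  by (metis ip_comm ip_diff_left)
lemma ip_smult_right: "ip h (smult c f) = c * ip h f"
  by (metis ip_comm ip_smult_left)

lemmas ip_lin = ip_add_left ip_diff_left ip_smult_left ip_add_right ip_diff_right ip_smult_right

lemma ip_sum:
  assumes "degree v \<le> n"
  shows "ip v g = (\<Sum>i\<le>n. coeff v i * ipx i g)"
proof -
  have pv: "poly v x = (\<Sum>i\<le>n. coeff v i * x ^ i)" for x
  proof -
    have "poly v x = poly (\<Sum>i\<le>n. monom (coeff v i) i) x"
      using poly_as_sum_of_monoms'[OF assms] by simp
    also have "\<dots> = (\<Sum>i\<le>n. coeff v i * x ^ i)"
      by (simp add: poly_sum poly_monom)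
    finally show ?thesis .
  qed
  have "ip v g = integral {-1..1} (\<lambda>x. \<Sum>i\<le>n. coeff v i * (x ^ i * poly g x))"
    unfolding ip_def pv by (simp add: sum_distrib_right mult.assoc)
  also have "\<dots> = (\<Sum>i\<le>n. integral {-1..1} (\<lambda>x. coeff v i * (x ^ i * poly g x)))"
    by (rule integral_sum) (auto intro!: integrable_continuous_interval continuous_intros)
  also have "\<dots> = (\<Sum>i\<le>n. coeff v i * ipx i g)"
    unfolding ipx_def by simp
  finally show ?thesis .
qed

lemma ip_orth:
  assumes "1 \<le> p" "degree v \<le> p - 1" "\<forall>i<p. ipx i g = 0"
  shows "ip v g = 0"
  using assms by (simp add: ip_sum[OF assms(2)])

lemma ip_repro1:
  assumes "1 \<le> p" "degree v \<le> p - 1" "\<forall>i<p. ipx i g = 1"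
  shows "ip v g = poly v 1"
proof -
  have "ip v g = (\<Sum>i\<le>p-1. coeff v i * 1 ^ i)"
    using assms by (simp add: ip_sum[OF assms(2)])
  also have "\<dots> = poly v 1"
    using poly_as_sum_of_monoms'[OF assms(2)]
    by (metis (no_types, lifting) poly_monom poly_sum sum.cong)
  finally show ?thesis .
qed

lemma ip_reprom:
  assumes "1 \<le> p" "degree v \<le> p - 1" "\<forall>i<p. ipx i g = (-1)^i"
  shows "ip v g = poly v (-1)"
proof -
  have "ip v g = (\<Sum>i\<le>p-1. coeff v i * (-1) ^ i)"
    using assms by (simp add: ip_sum[OF assms(2)])
  also have "\<dots> = poly v (-1)"
    using poly_as_sum_of_monoms'[OF assms(2)]
    by (metis (no_types, lifting) poly_monom poly_sum sum.cong)
  finally show ?thesis .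
qed

lemma ip_LL:
  assumes "degree L \<le> p" "\<forall>i<p. ipx i L = 0"
  shows "ip L L = coeff L p * ipx p L"
proof -
  have "ip L L = (\<Sum>i\<le>p. coeff L i * ipx i L)" by (rule ip_sum[OF assms(1)])
  also have "\<dots> = (\<Sum>i\<in>{p}. coeff L i * ipx i L)"
    by (rule sum.mono_neutral_right) (use assms in auto)
  finally show ?thesis by simp
qed

lemma ip_nonneg: "ip f f \<ge> 0"
  unfolding ip_def by (rule integral_nonneg) (auto intro: int_pp)

lemma ip_zero: assumes "ip f f = 0" shows "f = 0"
proof -
  have "\<forall>x\<in>{-1..1::real}. poly f x * poly f x = 0"
    using assms unfolding ip_def
    by (subst (asm) integral_eq_0_iff) (auto intro!: continuous_intros)
  then have "{-1..1::real} \<subseteq> {x. poly f x = 0}" by auto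
  moreover have "infinite {-1..1::real}" by (simp add: infinite_Icc)
  ultimately have "infinite {x. poly f x = 0}" using finite_subset by blast
  then show ?thesis using poly_roots_finite by blast
qed



lemma J_ip: "J psi eta = 2 * ip eta eta - ip (psi - smult 3 eta) (psi - smult 3 eta) / 4"
proof -
  have "J psi eta = integral {-1..1} (\<lambda>x. 2 * (poly eta x * poly eta x)
      - (1/4) * (poly (psi - smult 3 eta) x * poly (psi - smult 3 eta) x))"
    unfolding J_def by (rule integral_cong) (simp add: algebra_simps power2_eq_square)
  also have "\<dots> = 2 * ip eta eta - ip (psi - smult 3 eta) (psi - smult 3 eta) / 4"
    unfolding ip_def
    by (subst Henstock_Kurzweil_Integration.integral_diff)
       (auto intro!: integrable_continuous_interval continuous_intros)
  finally show ?thesis .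
qed

lemma deg_drop:
  fixes v :: "real poly"
  assumes "degree v \<le> p" "coeff v p = 0"
  shows "degree v \<le> p - 1"
proof (cases "v = 0")
  case False
  then have "coeff v (degree v) \<noteq> 0" by simp
  then have "degree v \<noteq> p" using assms by auto
  then show ?thesis using assms by linarith
qed simp


lemma pd2:
  fixes q11 q12 q22 x y :: real
  assumes "q11 > 0" "q11 * q22 - q12^2 > 0" "\<not> (x = 0 \<and> y = 0)"
  shows "q11 * x^2 + 2 * q12 * x * y + q22 * y^2 > 0"
proof -
  have "q11 * (q11 * x^2 + 2 * q12 * x * y + q22 * y^2) = (q11 * x + q12 * y)^2 + (q11 * q22 - q12^2) * y^2"
    by (simp add: algebra_simps power2_eq_square)
  moreover have "(q11 * x + q12 * y)^2 + (q11 * q22 - q12^2) * y^2 > 0"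
  proof (cases "y = 0")
    case True
    then have "x \<noteq> 0" using assms by auto
    then have "(q11 * x)^2 > 0" using assms by simp
    then show ?thesis using True by simp
  next
    case False
    then have "(q11 * q22 - q12^2) * y^2 > 0" using assms by simp
    then show ?thesis by (intro add_nonneg_pos) simp_all
  qed
  ultimately show ?thesis using assms(1) by (metis zero_less_mult_pos)
qed

lemma numpos:
  fixes p :: nat
  assumes "2 \<le> p" "p \<le> 13"
  shows "(0::real) < 12*(real p)^4 - (real p)^5 + 22*(real p)^3 - 4*(real p)^2 - 21*real p - 8"
proof -
  have "p = 2 \<or> p = 3 \<or> p = 4 \<or> p = 5 \<or> p = 6 \<or> p = 7 \<or> p = 8 \<or> p = 9 \<or> p = 10 \<or> p = 11 \<or> p = 12 \<or> p = 13"
    using assms by presburger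
  then show ?thesis by (elim disjE) simp_all
qed

lemma fin_ineq:
  fixes X x c :: real and p :: nat
  assumes "1 \<le> p" "p \<le> 13"
    and hb: "\<forall>\<alpha> \<beta>. X \<ge> 2*\<alpha>*x + 2*\<beta>*c - \<alpha>^2*(real p)^2/2 + \<alpha>*\<beta>*real p - \<beta>^2*(real p)^2/2"
    and "X > 0"
  shows "2*X - c^2/(2*(2*real p+1)) - (c+2*x)^2/(2*(real p)^2) > 0"
proof (cases "p = 1")
  case True
  have h1: "X \<ge> 2*t*(x+c)" for t
    using hb[rule_format, of t t] True by (simp add: power2_eq_square algebra_simps)
  have "x + c = 0"
  proof (rule ccontr)
    assume ne: "x + c \<noteq> 0"
    have "X \<ge> 2*((X+1)/(2*(x+c)))*(x+c)" by (rule h1)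
    also have "2*((X+1)/(2*(x+c)))*(x+c) = X + 1" using ne by (simp add: field_simps)
    finally show False by simp
  qed
  moreover have "X \<ge> 2*c^2"
    using hb[rule_format, of 0 "2*c"] True by (simp add: power2_eq_square algebra_simps)
  ultimately have "x = -c" "X \<ge> 2*c^2" by auto
  moreover have "c^2 \<ge> 0" by simp
  ultimately show ?thesis using True \<open>X > 0\<close>
    by (simp add: power2_eq_square)
next
  case False
  define P where "P = real p"
  have P2: "P \<ge> 2" using False assms(1) unfolding P_def by simp
  have num: "0 < 12*P^4 - P^5 + 22*P^3 - 4*P^2 - 21*P - 8"
    unfolding P_def using numpos[of p] False assms(1,2) by simp
  define E where "E = P^2 - 1"
  define F where "F = 2*P + 1"
  define M where "M = P*x^2 + 2*x*c + P*c^2"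
  have "P*P \<ge> 2*2" using P2 by (intro mult_mono) auto
  then have Epos: "E > 0" unfolding E_def by (simp add: power2_eq_square)
  have Fpos: "F > 0" unfolding F_def using P2 by simp
  have Ppos: "P > 0" using P2 by simp
  define D where "D = P * E"
  have Dpos: "D > 0" unfolding D_def using Epos Ppos by simp
  have idt: "P^2*((x*P+c)^2 + (c*P+x)^2) - 2*P*((x*P+c)*(c*P+x)) = D*M"
    unfolding D_def M_def E_def by (simp add: power2_eq_square algebra_simps)
  have XM: "X * D \<ge> 2 * M"
  proof -
    define k where "k = 2/D"
    have h: "X \<ge> 2*(k*(x*P+c))*x + 2*(k*(c*P+x))*c
       - (k*(x*P+c))^2*P^2/2 + (k*(x*P+c))*(k*(c*P+x))*P
       - (k*(c*P+x))^2*P^2/2"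
      using hb[rule_format, of "k*(x*P+c)" "k*(c*P+x)"] unfolding P_def by simp
    have "2*(k*(x*P+c))*x + 2*(k*(c*P+x))*c
       - (k*(x*P+c))^2*P^2/2 + (k*(x*P+c))*(k*(c*P+x))*P
       - (k*(c*P+x))^2*P^2/2
       = 2*k*M - k^2/2 * (P^2*((x*P+c)^2 + (c*P+x)^2) - 2*P*((x*P+c)*(c*P+x)))"
      unfolding M_def by (simp add: power2_eq_square field_simps)
    also have "\<dots> = 2*k*M - k^2/2 * (D*M)" by (simp only: idt)
    also have "\<dots> = 2*M/D" unfolding k_def using Dpos by (simp add: power2_eq_square field_simps)
    finally have "X \<ge> 2*M/D" using h by simp
    then show ?thesis using Dpos by (simp add: pos_divide_le_eq mult.commute)
  qed
  define a11 where "a11 = 4*F*(P^2+1)"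
  define a12 where "a12 = 2*F*(4*P + 1 - P^2)"
  define a22 where "a22 = 8*P^2*F - P^2*E - E*F"
  have form: "8*P*F*M - c^2*P^2*E - (c+2*x)^2*E*F = a11*x^2 + 2*a12*x*c + a22*c^2"
    unfolding a11_def a12_def a22_def M_def E_def F_def by (simp add: power2_eq_square algebra_simps)
  have detq: "a11*a22 - a12^2 = 4*F*(P*(12*P^4 - P^5 + 22*P^3 - 4*P^2 - 21*P - 8))"
    unfolding a11_def a12_def a22_def E_def F_def by (simp add: eval_nat_numeral algebra_simps)
  have "P^2 + 1 > 0" by (simp add: add_nonneg_pos)
  then have a11pos: "a11 > 0" unfolding a11_def using Fpos by simp
  have detpos: "a11*a22 - a12^2 > 0" unfolding detq using Fpos Ppos num by simp
  have key: "4*P^2*E*F*X - c^2*P^2*E - (c+2*x)^2*E*F > 0"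
  proof (cases "x = 0 \<and> c = 0")
    case True then show ?thesis using \<open>X > 0\<close> Ppos Epos Fpos by simp
  next
    case nz: False
    have "4*P^2*E*F*X = (4*P*F) * (X*D)" unfolding D_def by (simp add: power2_eq_square algebra_simps)
    also have "\<dots> \<ge> (4*P*F) * (2*M)" using XM Ppos Fpos by (intro mult_left_mono) auto
    finally have "4*P^2*E*F*X - c^2*P^2*E - (c+2*x)^2*E*F \<ge> a11*x^2 + 2*a12*x*c + a22*c^2"
      using form by (simp add: algebra_simps)
    moreover have "a11*x^2 + 2*a12*x*c + a22*c^2 > 0" by (rule pd2) (use a11pos detpos nz in auto)
    ultimately show ?thesis by linarith
  qed
  have "2*X - c^2/(2*F) - (c+2*x)^2/(2*P^2) = (4*P^2*E*F*X - c^2*P^2*E - (c+2*x)^2*E*F) / (2*P^2*E*F)"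
    using Ppos Epos Fpos by (simp add: field_simps power2_eq_square)
  also have "\<dots> > 0" using key Ppos Epos Fpos by simp
  finally show ?thesis unfolding F_def P_def by simp
qed



lemma ip_expand2:
  "ip (v - smult r1 f - smult r2 g) (v - smult r1 f - smult r2 g) =
   ip v v - 2*r1*(ip v f) - 2*r2*(ip v g) + r1^2*(ip f f) + 2*r1*r2*(ip f g) + r2^2 * (ip g g)"
proof -
  have c1: "ip f v = ip v f" "ip g v = ip v g" "ip g f = ip f g" by (simp_all add: ip_comm)
  show ?thesis by (simp add: ip_lin c1 power2_eq_square algebra_simps)
qed

lemma main_data:
  fixes p :: nat and eta L K1 Km :: "real poly"
  assumes p1: "1 \<le> p" and p13: "p \<le> 13"
    and deta: "degree eta \<le> p" and em1: "poly eta (-1) = 0" and enz: "eta \<noteq> 0"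
    and Ldeg: "degree L \<le> p" and Llc: "coeff L p \<noteq> 0" and Lorth: "\<forall>i<p. ipx i L = 0"
    and Lnorm: "coeff L p * ipx p L = 2 / (2 * real p + 1)"
    and L1: "poly L 1 = 1" and Lm1: "poly L (-1) = (-1)^p"
    and K1deg: "degree K1 \<le> p - 1" and K1r: "\<forall>i<p. ipx i K1 = 1"
    and K11: "poly K1 1 = (real p)^2/2" and K1m1: "poly K1 (-1) = (-1)^(p-1) * real p / 2"
    and Kmdeg: "degree Km \<le> p - 1" and Kmr: "\<forall>i<p. ipx i Km = (-1)^i"
    and Kmm1: "poly Km (-1) = (real p)^2/2"
  shows "J (S p eta) eta > 0"
proof -
  define P where "P = real p"
  define A where "A = P^2/2"
  define N where "N = 2 / (2 * P + 1)"
  have Ppos: "P > 0" unfolding P_def using p1 by simp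
  have Apos: "A > 0" unfolding A_def using Ppos by simp
  define a where "a = coeff eta p / coeff L p"
  define v where "v = eta - smult a L"
  define b where "b = poly v 1"
  define c where "c = poly v (-1)"
  define \<tau> where "\<tau> = a - 2*b"
  define phi where "phi = smult 3 v + smult (\<tau>/A) K1"
  have NN: "ip L L = N" unfolding N_def P_def using ip_LL[OF Ldeg Lorth] Lnorm by simp
  have vdeg: "degree v \<le> p - 1"
  proof (rule deg_drop)
    show "degree v \<le> p" unfolding v_def
      using deta Ldeg degree_diff_le degree_smult_le by (meson order.trans)
    show "coeff v p = 0" unfolding v_def a_def using Llc by simp
  qed
  have eta_eq: "eta = v + smult a L" unfolding v_def by simp
  have vL: "ip v L = 0" by (rule ip_orth[OF p1 vdeg Lorth])
  have K1L: "ip K1 L = 0" by (rule ip_orth[OF p1 K1deg Lorth])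
  have vK1: "ip v K1 = b" unfolding b_def by (rule ip_repro1[OF p1 vdeg K1r])
  have vKm: "ip v Km = c" unfolding c_def by (rule ip_reprom[OF p1 vdeg Kmr])
  have K1K1: "ip K1 K1 = A" using ip_repro1[OF p1 K1deg K1r] K11 unfolding A_def P_def by simp
  have K1Km: "ip K1 Km = (-1)^(p-1) * P / 2" using ip_reprom[OF p1 K1deg Kmr] K1m1 unfolding P_def by simp
  have KmKm: "ip Km Km = A" using ip_reprom[OF p1 Kmdeg Kmr] Kmm1 unfolding A_def P_def by simp
  have eta1: "poly eta 1 = b + a" unfolding eta_eq b_def using L1 by simp
  have etam1: "c + a * (-1)^p = 0" using em1 unfolding eta_eq c_def using Lm1 by simp
  have phideg: "degree phi \<le> p - 1" unfolding phi_def
    using vdeg K1deg degree_add_le degree_smult_le by (meson order.trans)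
  have tK: "(\<tau>/A) * poly K1 1 = \<tau>" using K11 Apos unfolding A_def P_def by (simp add: field_simps)
  have phi1: "poly phi 1 = poly eta 1"
    unfolding phi_def eta1 using tK by (simp add: b_def[symmetric] \<tau>_def)
  have adm: "admissible p eta phi" unfolding admissible_def using phideg phi1 by simp
  define e where "e = smult (\<tau>/A) K1 - smult (3*a) L"
  have phie: "phi - smult 3 eta = e" unfolding phi_def e_def eta_eq
    by (simp add: algebra_simps smult_add_right)
  have ee: "ip e e = (\<tau>/A)^2 * A + 9 * a^2 * N"
    unfolding e_def by (simp add: ip_lin K1K1 NN K1L ip_comm[of L K1] power2_eq_square algebra_simps)
  have Jle: "J psi eta \<le> J phi eta \<and> (J psi eta = J phi eta \<longrightarrow> psi = phi)" if "admissible p eta psi" for psi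
  proof -
    define d where "d = psi - phi"
    have ddeg: "degree d \<le> p - 1" unfolding d_def using that phideg
      unfolding admissible_def using degree_diff_le by (meson order.trans)
    have d1: "poly d 1 = 0" unfolding d_def using that phi1 unfolding admissible_def by simp
    have dL: "ip d L = 0" by (rule ip_orth[OF p1 ddeg Lorth])
    have dK1: "ip d K1 = 0" using ip_repro1[OF p1 ddeg K1r] d1 by simp
    have de: "ip d e = 0" unfolding e_def by (simp add: ip_lin dL dK1)
    have pe: "psi - smult 3 eta = d + e" unfolding d_def phie[symmetric] by simp
    have "ip (psi - smult 3 eta) (psi - smult 3 eta) = ip d d + ip e e"
      unfolding pe by (simp add: ip_lin de ip_comm[of e d])
    then have "J psi eta = J phi eta - ip d d / 4"
      unfolding J_ip phie by (simp add: field_simps)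
    moreover have "ip d d \<ge> 0" by (rule ip_nonneg)
    moreover have "ip d d = 0 \<Longrightarrow> psi = phi" using ip_zero[of d] unfolding d_def by simp
    ultimately show ?thesis by auto
  qed
  have Seq: "S p eta = phi"
    unfolding S_def
  proof (rule the1_equality)
    show "\<exists>!phi. admissible p eta phi \<and> (\<forall>psi. admissible p eta psi \<longrightarrow> J psi eta \<le> J phi eta)"
    proof (rule ex1I[of _ phi])
      show "admissible p eta phi \<and> (\<forall>psi. admissible p eta psi \<longrightarrow> J psi eta \<le> J phi eta)"
        using adm Jle by blast
      fix psi assume "admissible p eta psi \<and> (\<forall>psi'. admissible p eta psi' \<longrightarrow> J psi' eta \<le> J psi eta)"
      then show "psi = phi" using Jle adm by (meson order.antisym)
    qed
    show "admissible p eta phi \<and> (\<forall>psi. admissible p eta psi \<longrightarrow> J psi eta \<le> J phi eta)"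
      using adm Jle by blast
  qed
  define X where "X = ip v v"
  define \<sigma> where "\<sigma> = ((-1)^p :: real)"
  have s2: "\<sigma> * \<sigma> = 1" unfolding \<sigma>_def by (simp flip: power_mult_distrib)
  have sB: "\<sigma> * ((-1)^(p-1)) = -1"
  proof -
    obtain q where q: "p = Suc q" using p1 by (cases p) auto
    show ?thesis unfolding \<sigma>_def q by (simp flip: power_mult_distrib)
  qed
  have veta: "ip eta eta = X + a^2 * N"
    unfolding eta_eq X_def by (simp add: ip_lin vL NN ip_comm[of L v] power2_eq_square)
  have Jphi: "J phi eta = 2*X - a^2*N/4 - \<tau>^2/(4*A)"
    unfolding J_ip phie ee veta using Apos by (simp add: power2_eq_square field_simps)
  have vnz: "v \<noteq> 0"
  proof
    assume "v = 0"
    then have "c = 0" unfolding c_def by simp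
    then have "a = 0" using etam1 by simp
    then show False using enz \<open>v = 0\<close> eta_eq by simp
  qed
  have Xpos: "X > 0" unfolding X_def using ip_nonneg[of v] ip_zero[of v] vnz by fastforce
  have hb: "\<forall>\<alpha> \<beta>. X \<ge> 2*\<alpha>*(\<sigma>*b) + 2*\<beta>*c - \<alpha>^2*(real p)^2/2 + \<alpha>*\<beta>*real p - \<beta>^2*(real p)^2/2"
  proof (intro allI)
    fix \<alpha> \<beta> :: real
    define w where "w = v - smult (\<sigma>*\<alpha>) K1 - smult \<beta> Km"
    have h0: "0 \<le> ip w w" by (rule ip_nonneg)
    have hw: "ip w w = X - 2*(\<sigma>*\<alpha>)*b - 2*\<beta>*c + (\<sigma>*\<alpha>)^2*A + 2*(\<sigma>*\<alpha>)*\<beta>*(ip K1 Km) + \<beta>^2*A"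
      unfolding w_def X_def ip_expand2 vK1 vKm K1K1 KmKm by simp
    have e2: "2*(\<sigma>*\<alpha>)*\<beta>*(ip K1 Km) = - (\<alpha>*\<beta>*real p)"
    proof -
      have "2*(\<sigma>*\<alpha>)*\<beta>*(ip K1 Km) = \<alpha>*\<beta>*P*(\<sigma>*((-1)^(p-1)))" unfolding K1Km by (simp add: algebra_simps)
      also have "\<dots> = - (\<alpha>*\<beta>*P)" unfolding sB by simp
      finally show ?thesis unfolding P_def .
    qed
    have e1: "(\<sigma>*\<alpha>)^2*A = \<alpha>^2*(real p)^2/2"
    proof -
      have "(\<sigma>*\<alpha>)^2 = \<alpha>^2" using s2 by (simp add: power2_eq_square algebra_simps)
      then show ?thesis unfolding A_def P_def by simp
    qed
    have e1': "\<beta>^2*A = \<beta>^2*(real p)^2/2" unfolding A_def P_def by simp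
    have e3: "2*(\<sigma>*\<alpha>)*b = 2*\<alpha>*(\<sigma>*b)" by simp
    show "X \<ge> 2*\<alpha>*(\<sigma>*b) + 2*\<beta>*c - \<alpha>^2*(real p)^2/2 + \<alpha>*\<beta>*real p - \<beta>^2*(real p)^2/2"
      using h0 hw e1 e1' e2 e3 by linarith
  qed
  have fin: "2*X - c^2/(2*(2*real p+1)) - (c+2*(\<sigma>*b))^2/(2*(real p)^2) > 0"
    by (rule fin_ineq[OF p1 p13 hb Xpos])
  have ac: "a = - \<sigma> * c"
  proof -
    have "\<sigma> * (c + a*\<sigma>) = 0" using etam1 unfolding \<sigma>_def by simp
    then have "\<sigma> * c + a * (\<sigma>*\<sigma>) = 0" by (simp add: algebra_simps)
    then show ?thesis using s2 by (simp add: algebra_simps)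
  qed
  have a2: "a^2 = c^2" using ac s2 by (simp add: power2_eq_square algebra_simps)
  have t2: "\<tau>^2 = (c + 2*(\<sigma>*b))^2"
  proof -
    have "\<tau> = - \<sigma> * (c + 2*(\<sigma>*b))" unfolding \<tau>_def ac using s2 by (simp add: algebra_simps)
    then have "\<tau>^2 = \<sigma>^2 * (c + 2*(\<sigma>*b))^2" by (simp add: power_mult_distrib)
    moreover have "\<sigma>^2 = 1" using s2 by (simp add: power2_eq_square)
    ultimately show ?thesis by simp
  qed
  have "J phi eta = 2*X - c^2/(2*(2*real p+1)) - (c+2*(\<sigma>*b))^2/(2*(real p)^2)"
    unfolding Jphi a2 t2 N_def A_def P_def by (simp add: field_simps)
  then show ?thesis using Seq fin by simp
qed



definition pdata :: "nat \<Rightarrow> real poly \<Rightarrow> real poly \<Rightarrow> real poly \<Rightarrow> bool" where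
  "pdata p L K1 Km \<longleftrightarrow> degree L \<le> p \<and> coeff L p \<noteq> 0 \<and> (\<forall>i\<in>{..<p}. ipx i L = 0)
    \<and> coeff L p * ipx p L = 2 / (2 * real p + 1) \<and> poly L 1 = 1 \<and> poly L (-1) = (-1)^p
    \<and> degree K1 \<le> p - 1 \<and> (\<forall>i\<in>{..<p}. ipx i K1 = 1)
    \<and> poly K1 1 = (real p)^2/2 \<and> poly K1 (-1) = (-1)^(p-1) * real p / 2
    \<and> degree Km \<le> p - 1 \<and> (\<forall>i\<in>{..<p}. ipx i Km = (-1)^i)
    \<and> poly Km (-1) = (real p)^2/2"

lemma degree_Poly_le: "degree (Poly xs) \<le> length xs - 1"
proof (induction xs)
  case (Cons a xs)
  then show ?case
  proof (cases "Poly xs = 0")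
    case False
    then have "xs \<noteq> []" by auto
    then have "length xs \<ge> 1" by (cases xs) auto
    then show ?thesis using Cons False by (simp add: degree_pCons_eq)
  qed simp
qed simp

lemma poly_Poly_foldr: "poly (Poly xs) x = foldr (\<lambda>a b. a + x * b) xs 0"
  by (induction xs) simp_all

lemma lessThan_one_nat: "{..<(1::nat)} = {0}" by auto

lemmas data_simps = pdata_def ipx_Poly mom_def lessThan_nat_numeral lessThan_one_nat coeff_Poly_eq nth_default_def poly_Poly_foldr

lemma data_1: "pdata 1 (Poly [0, 1]) (Poly [1/2]) (Poly [1/2])"
  using degree_Poly_le[of "[0, 1]::real list"] degree_Poly_le[of "[1/2]::real list"] degree_Poly_le[of "[1/2]::real list"]
  by (simp add: data_simps del: Poly.simps)
lemma data_2: "pdata 2 (Poly [(- (1/2)), 0, 3/2]) (Poly [1/2, 3/2]) (Poly [1/2, (- (3/2))])"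
  using degree_Poly_le[of "[(- (1/2)), 0, 3/2]::real list"] degree_Poly_le[of "[1/2, 3/2]::real list"] degree_Poly_le[of "[1/2, (- (3/2))]::real list"]
  by (simp add: data_simps del: Poly.simps)
lemma data_3: "pdata 3 (Poly [0, (- (3/2)), 0, 5/2]) (Poly [(- (3/4)), 3/2, 15/4]) (Poly [(- (3/4)), (- (3/2)), 15/4])"
  using degree_Poly_le[of "[0, (- (3/2)), 0, 5/2]::real list"] degree_Poly_le[of "[(- (3/4)), 3/2, 15/4]::real list"] degree_Poly_le[of "[(- (3/4)), (- (3/2)), 15/4]::real list"]
  by (simp add: data_simps del: Poly.simps)
lemma data_4: "pdata 4 (Poly [3/8, 0, (- (15/4)), 0, 35/8]) (Poly [(- (3/4)), (- (15/4)), 15/4, 35/4]) (Poly [(- (3/4)), 15/4, 15/4, (- (35/4))])"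
  using degree_Poly_le[of "[3/8, 0, (- (15/4)), 0, 35/8]::real list"] degree_Poly_le[of "[(- (3/4)), (- (15/4)), 15/4, 35/4]::real list"] degree_Poly_le[of "[(- (3/4)), 15/4, 15/4, (- (35/4))]::real list"]
  by (simp add: data_simps del: Poly.simps)
lemma data_5: "pdata 5 (Poly [0, 15/8, 0, (- (35/4)), 0, 63/8]) (Poly [15/16, (- (15/4)), (- (105/8)), 35/4, 315/16]) (Poly [15/16, 15/4, (- (105/8)), (- (35/4)), 315/16])"
  using degree_Poly_le[of "[0, 15/8, 0, (- (35/4)), 0, 63/8]::real list"] degree_Poly_le[of "[15/16, (- (15/4)), (- (105/8)), 35/4, 315/16]::real list"] degree_Poly_le[of "[15/16, 15/4, (- (105/8)), (- (35/4)), 315/16]::real list"]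
  by (simp add: data_simps del: Poly.simps)
lemma data_6: "pdata 6 (Poly [(- (5/16)), 0, 105/16, 0, (- (315/16)), 0, 231/16]) (Poly [15/16, 105/16, (- (105/8)), (- (315/8)), 315/16, 693/16]) (Poly [15/16, (- (105/16)), (- (105/8)), 315/8, 315/16, (- (693/16))])"
  using degree_Poly_le[of "[(- (5/16)), 0, 105/16, 0, (- (315/16)), 0, 231/16]::real list"] degree_Poly_le[of "[15/16, 105/16, (- (105/8)), (- (315/8)), 315/16, 693/16]::real list"] degree_Poly_le[of "[15/16, (- (105/16)), (- (105/8)), 315/8, 315/16, (- (693/16))]::real list"]
  by (simp add: data_simps del: Poly.simps)
lemma data_7: "pdata 7 (Poly [0, (- (35/16)), 0, 315/16, 0, (- (693/16)), 0, 429/16]) (Poly [(- (35/32)), 105/16, 945/32, (- (315/8)), (- (3465/32)), 693/16, 3003/32]) (Poly [(- (35/32)), (- (105/16)), 945/32, 315/8, (- (3465/32)), (- (693/16)), 3003/32])"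
  using degree_Poly_le[of "[0, (- (35/16)), 0, 315/16, 0, (- (693/16)), 0, 429/16]::real list"] degree_Poly_le[of "[(- (35/32)), 105/16, 945/32, (- (315/8)), (- (3465/32)), 693/16, 3003/32]::real list"] degree_Poly_le[of "[(- (35/32)), (- (105/16)), 945/32, 315/8, (- (3465/32)), (- (693/16)), 3003/32]::real list"]
  by (simp add: data_simps del: Poly.simps)
lemma data_8: "pdata 8 (Poly [35/128, 0, (- (315/32)), 0, 3465/64, 0, (- (3003/32)), 0, 6435/128]) (Poly [(- (35/32)), (- (315/32)), 945/32, 3465/32, (- (3465/32)), (- (9009/32)), 3003/32, 6435/32]) (Poly [(- (35/32)), 315/32, 945/32, (- (3465/32)), (- (3465/32)), 9009/32, 3003/32, (- (6435/32))])"
  using degree_Poly_le[of "[35/128, 0, (- (315/32)), 0, 3465/64, 0, (- (3003/32)), 0, 6435/128]::real list"] degree_Poly_le[of "[(- (35/32)), (- (315/32)), 945/32, 3465/32, (- (3465/32)), (- (9009/32)), 3003/32, 6435/32]::real list"] degree_Poly_le[of "[(- (35/32)), 315/32, 945/32, (- (3465/32)), (- (3465/32)), 9009/32, 3003/32, (- (6435/32))]::real list"]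
  by (simp add: data_simps del: Poly.simps)
lemma data_9: "pdata 9 (Poly [0, 315/128, 0, (- (1155/32)), 0, 9009/64, 0, (- (6435/32)), 0, 12155/128]) (Poly [315/256, (- (315/32)), (- (3465/64)), 3465/32, 45045/128, (- (9009/32)), (- (45045/64)), 6435/32, 109395/256]) (Poly [315/256, 315/32, (- (3465/64)), (- (3465/32)), 45045/128, 9009/32, (- (45045/64)), (- (6435/32)), 109395/256])"
  using degree_Poly_le[of "[0, 315/128, 0, (- (1155/32)), 0, 9009/64, 0, (- (6435/32)), 0, 12155/128]::real list"] degree_Poly_le[of "[315/256, (- (315/32)), (- (3465/64)), 3465/32, 45045/128, (- (9009/32)), (- (45045/64)), 6435/32, 109395/256]::real list"] degree_Poly_le[of "[315/256, 315/32, (- (3465/64)), (- (3465/32)), 45045/128, 9009/32, (- (45045/64)), (- (6435/32)), 109395/256]::real list"]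
  by (simp add: data_simps del: Poly.simps)
lemma data_10: "pdata 10 (Poly [(- (63/256)), 0, 3465/256, 0, (- (15015/128)), 0, 45045/128, 0, (- (109395/256)), 0, 46189/256]) (Poly [315/256, 3465/256, (- (3465/64)), (- (15015/64)), 45045/128, 135135/128, (- (45045/64)), (- (109395/64)), 109395/256, 230945/256]) (Poly [315/256, (- (3465/256)), (- (3465/64)), 15015/64, 45045/128, (- (135135/128)), (- (45045/64)), 109395/64, 109395/256, (- (230945/256))])"
  using degree_Poly_le[of "[(- (63/256)), 0, 3465/256, 0, (- (15015/128)), 0, 45045/128, 0, (- (109395/256)), 0, 46189/256]::real list"] degree_Poly_le[of "[315/256, 3465/256, (- (3465/64)), (- (15015/64)), 45045/128, 135135/128, (- (45045/64)), (- (109395/64)), 109395/256, 230945/256]::real list"] degree_Poly_le[of "[315/256, (- (3465/256)), (- (3465/64)), 15015/64, 45045/128, (- (135135/128)), (- (45045/64)), 109395/64, 109395/256, (- (230945/256))]::real list"]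
  by (simp add: data_simps del: Poly.simps)
lemma data_11: "pdata 11 (Poly [0, (- (693/256)), 0, 15015/256, 0, (- (45045/128)), 0, 109395/128, 0, (- (230945/256)), 0, 88179/256]) (Poly [(- (693/512)), 3465/256, 45045/512, (- (15015/64)), (- (225225/256)), 135135/128, 765765/256, (- (109395/64)), (- (2078505/512)), 230945/256, 969969/512]) (Poly [(- (693/512)), (- (3465/256)), 45045/512, 15015/64, (- (225225/256)), (- (135135/128)), 765765/256, 109395/64, (- (2078505/512)), (- (230945/256)), 969969/512])"
  using degree_Poly_le[of "[0, (- (693/256)), 0, 15015/256, 0, (- (45045/128)), 0, 109395/128, 0, (- (230945/256)), 0, 88179/256]::real list"] degree_Poly_le[of "[(- (693/512)), 3465/256, 45045/512, (- (15015/64)), (- (225225/256)), 135135/128, 765765/256, (- (109395/64)), (- (2078505/512)), 230945/256, 969969/512]::real list"] degree_Poly_le[of "[(- (693/512)), (- (3465/256)), 45045/512, 15015/64, (- (225225/256)), (- (135135/128)), 765765/256, 109395/64, (- (2078505/512)), (- (230945/256)), 969969/512]::real list"]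
  by (simp add: data_simps del: Poly.simps)
lemma data_12: "pdata 12 (Poly [231/1024, 0, (- (9009/512)), 0, 225225/1024, 0, (- (255255/256)), 0, 2078505/1024, 0, (- (969969/512)), 0, 676039/1024]) (Poly [(- (693/512)), (- (9009/512)), 45045/512, 225225/512, (- (225225/256)), (- (765765/256)), 765765/256, 2078505/256, (- (2078505/512)), (- (4849845/512)), 969969/512, 2028117/512]) (Poly [(- (693/512)), 9009/512, 45045/512, (- (225225/512)), (- (225225/256)), 765765/256, 765765/256, (- (2078505/256)), (- (2078505/512)), 4849845/512, 969969/512, (- (2028117/512))])"
  using degree_Poly_le[of "[231/1024, 0, (- (9009/512)), 0, 225225/1024, 0, (- (255255/256)), 0, 2078505/1024, 0, (- (969969/512)), 0, 676039/1024]::real list"] degree_Poly_le[of "[(- (693/512)), (- (9009/512)), 45045/512, 225225/512, (- (225225/256)), (- (765765/256)), 765765/256, 2078505/256, (- (2078505/512)), (- (4849845/512)), 969969/512, 2028117/512]::real list"] degree_Poly_le[of "[(- (693/512)), 9009/512, 45045/512, (- (225225/512)), (- (225225/256)), 765765/256, 765765/256, (- (2078505/256)), (- (2078505/512)), 4849845/512, 969969/512, (- (2028117/512))]::real list"]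
  by (simp add: data_simps del: Poly.simps)
lemma data_13: "pdata 13 (Poly [0, 3003/1024, 0, (- (45045/512)), 0, 765765/1024, 0, (- (692835/256)), 0, 4849845/1024, 0, (- (2028117/512)), 0, 1300075/1024]) (Poly [3003/2048, (- (9009/512)), (- (135135/1024)), 225225/512, 3828825/2048, (- (765765/256)), (- (4849845/512)), 2078505/256, 43648605/2048, (- (4849845/512)), (- (22309287/1024)), 2028117/512, 16900975/2048]) (Poly [3003/2048, 9009/512, (- (135135/1024)), (- (225225/512)), 3828825/2048, 765765/256, (- (4849845/512)), (- (2078505/256)), 43648605/2048, 4849845/512, (- (22309287/1024)), (- (2028117/512)), 16900975/2048])"
  using degree_Poly_le[of "[0, 3003/1024, 0, (- (45045/512)), 0, 765765/1024, 0, (- (692835/256)), 0, 4849845/1024, 0, (- (2028117/512)), 0, 1300075/1024]::real list"] degree_Poly_le[of "[3003/2048, (- (9009/512)), (- (135135/1024)), 225225/512, 3828825/2048, (- (765765/256)), (- (4849845/512)), 2078505/256, 43648605/2048, (- (4849845/512)), (- (22309287/1024)), 2028117/512, 16900975/2048]::real list"] degree_Poly_le[of "[3003/2048, 9009/512, (- (135135/1024)), (- (225225/512)), 3828825/2048, 765765/256, (- (4849845/512)), (- (2078505/256)), 43648605/2048, 4849845/512, (- (22309287/1024)), (- (2028117/512)), 16900975/2048]::real list"]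
  by (simp add: data_simps del: Poly.simps)

lemma data_ex:
  assumes "1 \<le> p" "p \<le> 13"
  shows "\<exists>L K1 Km. pdata p L K1 Km"
proof -
  have "p = 1 \<or> p = 2 \<or> p = 3 \<or> p = 4 \<or> p = 5 \<or> p = 6 \<or> p = 7 \<or> p = 8 \<or> p = 9 \<or> p = 10 \<or> p = 11 \<or> p = 12 \<or> p = 13"
    using assms by presburger
  then show ?thesis
    using data_1 data_2 data_3 data_4 data_5 data_6 data_7 data_8 data_9 data_10 data_11 data_12 data_13
    by (elim disjE) blast+
qed

theorem lemma9:
  fixes p :: nat and eta :: "real poly"
  assumes "1 \<le> p" and "p \<le> 13"
    and "degree eta \<le> p"
    and "poly eta (-1) = 0"
    and "eta \<noteq> 0"
  shows "J (S p eta) eta > 0"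
proof -
  obtain L K1 Km where d: "pdata p L K1 Km" using data_ex[OF assms(1,2)] by blast
  show ?thesis
    by (rule main_data[OF assms, of L K1 Km]) (use d in \<open>simp_all add: pdata_def\<close>)
qed


end
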